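(* Let $G$ and $H$ be decision structures. Then $G$ and $H$ are structurally equivalent if and only if they are isomorphic as arc-labelled graphs, i.e. there is a bijection $\Gamma:N(G)\to N(H)$ such that for all $u,v\in N(G)$ we have $(u,v)\in A(G)$ iff $(\Gamma(u),\Gamma(v))\in A(H)$, and in that case $\ell_G(u,v)=\ell_H(\Gamma(u),\Gamma(v))$.
   Context: Fix a nonempty set $\mathbb{W}$ of states, a set $\mathbb{S}$ of signals with at least two elements, and a set $\mathcal{R}$ of return values. An action is a pair $\alpha=(\alpha_B,\alpha_R)$ of functions $\alpha_B:\mathbb{W}\to\mathbb{S}$ and $\alpha_R:\mathbb{W}\to\mathcal{R}$; $\mathcal{A}$ denotes the set of all actions. A decision structure is a finite directed acyclic graph $Z=(N,A)$, $A\subseteq N\times N$, with a unique source (node with no incoming arc), together with an arc labelling $\ell:A\to\mathcal{R}$ and a node labelling $\eta:N\to\mathcal{A}$, such that distinct arcs leaving the same node have distinct labels; the arc out of $v$ labelled $r$, if it exists, is called the $r$-arc out of $v$. For a state $w$, the action $Z(w)$ selected by $Z$ is obtained as follows: start at the source; at the current node $v$ with $\eta(v)=\alpha$, if the $\alpha_R(w)$-arc out of $v$ exists move to its head and repeat, otherwise output $\alpha$. Two decision structures $G,H$ are structurally equivalent if they have the same number $n$ of nodes and there are enumerations $g_1,\dots,g_n$ of $N(G)$ and $h_1,\dots,h_n$ of $N(H)$ such that for every choice of actions $\alpha_1,\dots,\alpha_n$, relabelling $g_i$ and $h_i$ by $\alpha_i$ for all $i$ yields $G(w)=H(w)$ for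 every state $w$ (the original node labels play no role). It is assumed that $\mathcal{R}$ contains at least one value that does not label any arc of $G$ or $H$. *)

theory Defs
  imports Main
begin

text \<open>An action: a pair of functions from states to signals and to return values.\<close>
type_synonym ('w,'s,'r) action = "('w \<Rightarrow> 's) \<times> ('w \<Rightarrow> 'r)"

record ('n,'w,'s,'r) dstruct =
  nodes :: "'n set"
  arcs  :: "('n \<times> 'n) set"
  lab   :: "'n \<times> 'n \<Rightarrow> 'r"
  act   :: "'n \<Rightarrow> ('w,'s,'r) action"

definition is_source :: "('n,'w,'s,'r) dstruct \<Rightarrow> 'n \<Rightarrow> bool" where
  "is_source Z s \<longleftrightarrow> s \<in> nodes Z \<and> (\<forall>v. (v, s) \<notin> arcs Z)"

definition decision_structure :: "('n,'w,'s,'r) dstruct \<Rightarrow> bool" where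
  "decision_structure Z \<longleftrightarrow>
     finite (nodes Z) \<and>
     arcs Z \<subseteq> nodes Z \<times> nodes Z \<and>
     acyclic (arcs Z) \<and>
     (\<exists>!s. is_source Z s) \<and>
     (\<forall>v u1 u2. (v, u1) \<in> arcs Z \<longrightarrow> (v, u2) \<in> arcs Z \<longrightarrow> u1 \<noteq> u2
        \<longrightarrow> lab Z (v, u1) \<noteq> lab Z (v, u2))"

definition source :: "('n,'w,'s,'r) dstruct \<Rightarrow> 'n" where
  "source Z = (THE s. is_source Z s)"

inductive selects :: "('n,'w,'s,'r) dstruct \<Rightarrow> 'w \<Rightarrow> 'n \<Rightarrow> ('w,'s,'r) action \<Rightarrow> bool"
  for Z w where
  stop: "\<not> (\<exists>u. (v, u) \<in> arcs Z \<and> lab Z (v, u) = snd (act Z v) w)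
         \<Longrightarrow> selects Z w v (act Z v)"
| move: "(v, u) \<in> arcs Z \<Longrightarrow> lab Z (v, u) = snd (act Z v) w
         \<Longrightarrow> selects Z w u \<alpha> \<Longrightarrow> selects Z w v \<alpha>"

definition selected :: "('n,'w,'s,'r) dstruct \<Rightarrow> 'w \<Rightarrow> ('w,'s,'r) action" where
  "selected Z w = (THE \<alpha>. selects Z w (source Z) \<alpha>)"

text \<open>Structural equivalence: enumerations g_1..g_n, h_1..h_n (as bijections from
  {0..<n}) such that every relabelling g_i, h_i \<mapsto> \<alpha>_i gives equal selected actions.\<close>
definition struct_equiv :: "('g,'w,'s,'r) dstruct \<Rightarrow> ('h,'w,'s,'r) dstruct \<Rightarrow> bool" where
  "struct_equiv G H \<longleftrightarrow>
     card (nodes G) = card (nodes H) \<and>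
     (\<exists>g h. bij_betw g {..<card (nodes G)} (nodes G) \<and>
            bij_betw h {..<card (nodes G)} (nodes H) \<and>
            (\<forall>\<alpha> :: nat \<Rightarrow> ('w,'s,'r) action. \<forall>w.
               selected (G\<lparr>act := (\<lambda>v. \<alpha> (inv_into {..<card (nodes G)} g v))\<rparr>) w =
               selected (H\<lparr>act := (\<lambda>v. \<alpha> (inv_into {..<card (nodes G)} h v))\<rparr>) w))"

definition arc_iso :: "('g,'w,'s,'r) dstruct \<Rightarrow> ('h,'w,'s,'r) dstruct \<Rightarrow> bool" where
  "arc_iso G H \<longleftrightarrow>
     (\<exists>\<Gamma>. bij_betw \<Gamma> (nodes G) (nodes H) \<and>
        (\<forall>u\<in>nodes G. \<forall>v\<in>nodes G.
           ((u, v) \<in> arcs G \<longleftrightarrow> (\<Gamma> u, \<Gamma> v) \<in> arcs H) \<and>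
           ((u, v) \<in> arcs G \<longrightarrow> lab G (u, v) = lab H (\<Gamma> u, \<Gamma> v))))"

end

theory Submission
  imports Defs
begin

definition stp :: "('n,'w,'s,'r) dstruct \<Rightarrow> ('n \<Rightarrow> 'r) \<Rightarrow> ('n \<times> 'n) set" where
  "stp Z f = {(x,y). (x,y) \<in> arcs Z \<and> lab Z (x,y) = f x}"

lemma stp_upd[simp]: "stp (Z\<lparr>act := a\<rparr>) f = stp Z f"
  by (simp add: stp_def)

lemma stp_sub: "stp Z f \<subseteq> arcs Z" by (auto simp: stp_def)

lemma stp_mono:
  assumes "\<And>x. f x \<noteq> r0 \<Longrightarrow> f' x = f x" "r0 \<notin> lab Z ` arcs Z"
  shows "stp Z f \<subseteq> stp Z f'"
  using assms by (force simp: stp_def)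

lemma source_upd[simp]: "source (Z\<lparr>act := a\<rparr>) = source Z"
  by (simp add: source_def is_source_def)

lemma ds_upd[simp]: "decision_structure (Z\<lparr>act := a\<rparr>) = decision_structure Z"
  by (simp add: decision_structure_def is_source_def)

lemma selects_det:
  assumes "decision_structure Z"
  shows "selects Z w v a \<Longrightarrow> selects Z w v b \<Longrightarrow> a = b"
proof (induction arbitrary: b rule: selects.induct)
  case (stop v)
  from stop.prems show ?case by (cases rule: selects.cases) (simp, use stop.hyps in blast)
next
  case (move v u \<alpha>)
  note M = move
  from move.prems show ?case
  proof (cases rule: selects.cases)
    case stop then show ?thesis using M(1,2) by blast
  next
    case (move u')
    have D: "\<forall>v u1 u2. (v, u1) \<in> arcs Z \<longrightarrow> (v, u2) \<in> arcs Z \<longrightarrow> u1 \<noteq> u2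
        \<longrightarrow> lab Z (v, u1) \<noteq> lab Z (v, u2)" using assms unfolding decision_structure_def by blast
    have "u' = u" using D M(1,2) move(1,2) by metis
    then show ?thesis using M(4) move(3) by blast
  qed
qed

lemma selects_path:
  assumes "(v,z) \<in> (stp Z (\<lambda>x. snd (act Z x) w))\<^sup>*"
    and "\<not> (\<exists>y. (z,y) \<in> stp Z (\<lambda>x. snd (act Z x) w))"
  shows "selects Z w v (act Z z)"
  using assms(1)
proof (induction rule: converse_rtrancl_induct)
  case base
  then show ?case using assms(2) by (intro selects.stop) (auto simp: stp_def)
next
  case (step y z')
  then show ?case by (intro selects.move[of y z']) (auto simp: stp_def)
qed

lemma is_source_source: "decision_structure Z \<Longrightarrow> is_source Z (source Z)"
  unfolding decision_structure_def source_def by (metis theI')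

lemma selected_eq:
  assumes "decision_structure Z"
    and "(source Z,z) \<in> (stp Z (\<lambda>x. snd (act Z x) w))\<^sup>*"
    and "\<not> (\<exists>y. (z,y) \<in> stp Z (\<lambda>x. snd (act Z x) w))"
  shows "selected Z w = act Z z"
  unfolding selected_def
  using selects_path[OF assms(2,3)] selects_det[OF assms(1)] by (intro the_equality) auto

lemma finite_arcs: "decision_structure Z \<Longrightarrow> finite (arcs Z)"
proof -
  assume "decision_structure Z"
  then have "arcs Z \<subseteq> nodes Z \<times> nodes Z" "finite (nodes Z)" unfolding decision_structure_def by auto
  then show ?thesis using finite_subset by blast
qed

lemma acyc: "decision_structure Z \<Longrightarrow> acyclic (arcs Z)"
  by (simp add: decision_structure_def)

lemma arcs_nodes: "decision_structure Z \<Longrightarrow> (u,v) \<in> arcs Z \<Longrightarrow> u \<in> nodes Z \<and> v \<in> nodes Z"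
  unfolding decision_structure_def by blast

lemma selects_exists:
  assumes "decision_structure Z"
  shows "\<exists>a. selects Z w v a"
proof -
  have wf: "wf ((arcs Z)\<inverse>)"
    using finite_arcs[OF assms] acyc[OF assms] by (rule finite_acyclic_wf_converse)
  show ?thesis
  proof (induction v rule: wf_induct[OF wf])
    case (1 v)
    show ?case
    proof (cases "\<exists>u. (v, u) \<in> arcs Z \<and> lab Z (v, u) = snd (act Z v) w")
      case True
      then obtain u where u: "(v, u) \<in> arcs Z" "lab Z (v, u) = snd (act Z v) w" by blast
      have "\<exists>a. selects Z w u a" using 1 u(1) by (simp add: converse_iff)
      then obtain a where a: "selects Z w u a" ..
      show ?thesis using selects.move[OF u a] by (rule exI)
    next
      case False show ?thesis using selects.stop[OF False] by (rule exI)
    qed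
  qed
qed

lemma reach:
  assumes "decision_structure Z" "u \<in> nodes Z"
  shows "(source Z, u) \<in> (arcs Z)\<^sup>*"
proof -
  have wf: "wf (arcs Z)"
    using finite_arcs[OF assms(1)] acyc[OF assms(1)] by (rule finite_acyclic_wf)
  show ?thesis using assms(2)
  proof (induction u rule: wf_induct[OF wf])
    case (1 u)
    show ?case
    proof (cases "\<exists>v. (v, u) \<in> arcs Z")
      case True
      then obtain v where v: "(v,u) \<in> arcs Z" by blast
      then have "v \<in> nodes Z" using arcs_nodes[OF assms(1)] by blast
      with 1 v have "(source Z, v) \<in> (arcs Z)\<^sup>*" by blast
      then show ?thesis using v by auto
    next
      case False
      then have "is_source Z u" using 1 by (simp add: is_source_def)
      then have "u = source Z" using assms(1) is_source_source unfolding decision_structure_def by blast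
      then show ?thesis by simp
    qed
  qed
qed


lemma trancl_irrefl_acyc: "acyclic r \<Longrightarrow> (x,x) \<notin> r\<^sup>+"
  by (simp add: acyclic_def)

lemma fwd:
  fixes G :: "('g,'w,'s,'r) dstruct" and H :: "('h,'w,'s,'r) dstruct"
  assumes dG: "decision_structure G" and dH: "decision_structure H"
    and s12: "(s1::'s) \<noteq> s2"
    and r0G: "r0 \<notin> lab G ` arcs G" and r0H: "r0 \<notin> lab H ` arcs H"
    and bg: "bij_betw g {..<n} (nodes G)" and bh: "bij_betw h {..<n} (nodes H)"
    and eq: "\<forall>\<alpha> :: nat \<Rightarrow> ('w,'s,'r) action. \<forall>w.
               selected (G\<lparr>act := (\<lambda>v. \<alpha> (inv_into {..<n} g v))\<rparr>) w =
               selected (H\<lparr>act := (\<lambda>v. \<alpha> (inv_into {..<n} h v))\<rparr>) w"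
    and uv0: "(u0,v0) \<in> arcs G"
  shows "(h (inv_into {..<n} g u0), h (inv_into {..<n} g v0)) \<in> arcs H \<and>
         lab G (u0,v0) = lab H (h (inv_into {..<n} g u0), h (inv_into {..<n} g v0))"
proof -
  define iG where "iG = inv_into {..<n} g"
  define iH where "iH = inv_into {..<n} h"
  define \<Gamma> where "\<Gamma> = (\<lambda>x. h (iG x))"
  have iG_lt: "iG x < n" if "x \<in> nodes G" for x
    using that bg unfolding iG_def by (metis bij_betw_imp_surj_on inv_into_into lessThan_iff)
  have g_iG: "g (iG x) = x" if "x \<in> nodes G" for x
    using bg that unfolding iG_def by (rule bij_betw_inv_into_right)
  have h_iH: "h (iH y) = y" if "y \<in> nodes H" for y
    using bh that unfolding iH_def by (rule bij_betw_inv_into_right)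
  have iH_h: "iH (h i) = i" if "i < n" for i
    using bh that unfolding iH_def by (simp add: bij_betw_inv_into_left)
  have iH_G: "iH (\<Gamma> x) = iG x" if "x \<in> nodes G" for x
    using iH_h iG_lt that unfolding \<Gamma>_def by blast
  have G_nodes: "\<Gamma> x \<in> nodes H" if "x \<in> nodes G" for x
    using bh iG_lt[OF that] unfolding \<Gamma>_def by (simp add: bij_betw_apply)
  have iG_inj: "x = y" if "x \<in> nodes G" "y \<in> nodes G" "iG x = iG y" for x y
    using g_iG that by metis
  have H_iH: "y = \<Gamma> x" if "y \<in> nodes H" "x \<in> nodes G" "iH y = iG x" for x y
    using h_iH that unfolding \<Gamma>_def by metis

  have K: "iG zG = iH zH"
    if "(source G, zG) \<in> (stp G (\<lambda>x. \<rho> (iG x)))\<^sup>*" "\<not> (\<exists>y. (zG,y) \<in> stp G (\<lambda>x. \<rho> (iG x)))"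
       "(source H, zH) \<in> (stp H (\<lambda>x. \<rho> (iH x)))\<^sup>*" "\<not> (\<exists>y. (zH,y) \<in> stp H (\<lambda>x. \<rho> (iH x)))"
    for \<rho> zG zH
  proof -
    define \<sigma> where "\<sigma> = (\<lambda>i. if i = iG zG then s2 else s1)"
    define \<alpha> where "\<alpha> = (\<lambda>i. ((\<lambda>_::'w. \<sigma> i), (\<lambda>_::'w. \<rho> i)))"
    define w :: 'w where "w = undefined"
    let ?G = "G\<lparr>act := (\<lambda>v. \<alpha> (inv_into {..<n} g v))\<rparr>"
    let ?H = "H\<lparr>act := (\<lambda>v. \<alpha> (inv_into {..<n} h v))\<rparr>"
    have sG: "stp ?G (\<lambda>x. snd (act ?G x) w) = stp G (\<lambda>x. \<rho> (iG x))"
      by (simp add: \<alpha>_def iG_def)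
    have sH: "stp ?H (\<lambda>x. snd (act ?H x) w) = stp H (\<lambda>x. \<rho> (iH x))"
      by (simp add: \<alpha>_def iH_def)
    have "selected ?G w = act ?G zG"
      by (rule selected_eq) (use dG that(1,2) sG in simp_all)
    moreover have "selected ?H w = act ?H zH"
      by (rule selected_eq) (use dH that(3,4) sH in simp_all)
    moreover have "selected ?G w = selected ?H w" using eq by blast
    ultimately have "\<alpha> (iG zG) = \<alpha> (iH zH)" by (simp add: iG_def iH_def)
    then have "\<sigma> (iG zG) = \<sigma> (iH zH)" unfolding \<alpha>_def by (metis fst_conv)
    then show ?thesis using s12 unfolding \<sigma>_def by (auto split: if_splits)
  qed

  have srcG: "source G \<in> nodes G" using is_source_source[OF dG] by (simp add: is_source_def)
  have srcH: "source H \<in> nodes H" using is_source_source[OF dH] by (simp add: is_source_def)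
  have stp0: "stp Z (\<lambda>_. r0) = {}" if "r0 \<notin> lab Z ` arcs Z" for Z :: "('n,'w,'s,'r) dstruct"
    using that by (force simp: stp_def)
  have src: "source H = \<Gamma> (source G)"
  proof -
    have "iG (source G) = iH (source H)"
      using K[where \<rho>="\<lambda>_. r0" and zG="source G" and zH="source H"] stp0[OF r0G] stp0[OF r0H] by simp
    then show ?thesis using H_iH srcG srcH by metis
  qed

  define Inv where "Inv = (\<lambda>u. \<exists>\<rho> S.
     (\<forall>i. \<rho> i \<noteq> r0 \<longrightarrow> i \<in> iG ` S) \<and> S \<subseteq> nodes G \<and> u \<in> nodes G \<and> u \<notin> S \<and>
     (\<forall>x\<in>S. (x,u) \<in> (stp G (\<lambda>x. \<rho> (iG x)))\<^sup>+) \<and>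
     (source G, u) \<in> (stp G (\<lambda>x. \<rho> (iG x)))\<^sup>* \<and>
     (source H, \<Gamma> u) \<in> (stp H (\<lambda>x. \<rho> (iH x)))\<^sup>* \<and>
     (\<forall>x\<in>S. (\<Gamma> x, \<Gamma> u) \<in> (stp H (\<lambda>x. \<rho> (iH x)))\<^sup>+))"

  have stepL: "(\<Gamma> u, \<Gamma> v) \<in> arcs H \<and> lab G (u,v) = lab H (\<Gamma> u, \<Gamma> v) \<and> Inv v"
    if "Inv u" "(u,v) \<in> arcs G" for u v
  proof -
    from that(1) obtain \<rho> S where
      a: "\<forall>i. \<rho> i \<noteq> r0 \<longrightarrow> i \<in> iG ` S" and b: "S \<subseteq> nodes G" "u \<in> nodes G" "u \<notin> S"
      and c: "\<forall>x\<in>S. (x,u) \<in> (stp G (\<lambda>x. \<rho> (iG x)))\<^sup>+"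
      and d: "(source G, u) \<in> (stp G (\<lambda>x. \<rho> (iG x)))\<^sup>*"
      and e: "(source H, \<Gamma> u) \<in> (stp H (\<lambda>x. \<rho> (iH x)))\<^sup>*"
      and f: "\<forall>x\<in>S. (\<Gamma> x, \<Gamma> u) \<in> (stp H (\<lambda>x. \<rho> (iH x)))\<^sup>+"
      unfolding Inv_def by blast
    define lb where "lb = lab G (u,v)"
    define \<rho>' where "\<rho>' = \<rho>(iG u := lb)"
    have vN: "v \<in> nodes G" using arcs_nodes[OF dG that(2)] by blast
    have ru: "\<rho> (iG u) = r0"
    proof (rule ccontr)
      assume "\<rho> (iG u) \<noteq> r0"
      then obtain x where "x \<in> S" "iG u = iG x" using a by blast
      then show False using iG_inj b by blast
    qed
    have agree: "\<rho>' i = \<rho> i" if "\<rho> i \<noteq> r0" for i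
      using that ru unfolding \<rho>'_def by auto
    have monoG: "stp G (\<lambda>x. \<rho> (iG x)) \<subseteq> stp G (\<lambda>x. \<rho>' (iG x))"
      by (rule stp_mono[OF _ r0G]) (use agree in blast)
    have monoH: "stp H (\<lambda>x. \<rho> (iH x)) \<subseteq> stp H (\<lambda>x. \<rho>' (iH x))"
      by (rule stp_mono[OF _ r0H]) (use agree in blast)
    have aG: "acyclic (arcs G)" using acyc[OF dG] .
    have aH: "acyclic (arcs H)" using acyc[OF dH] .
    have uv_ne: "u \<noteq> v"
      using that(2) trancl_irrefl_acyc[OF aG, of u] by auto
    have vS: "v \<notin> S"
    proof
      assume "v \<in> S"
      then have "(v,u) \<in> (stp G (\<lambda>x. \<rho> (iG x)))\<^sup>+" using c by blast
      then have "(v,u) \<in> (arcs G)\<^sup>+" using trancl_mono stp_sub by blast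
      then have "(v,v) \<in> (arcs G)\<^sup>+" using that(2) by (rule trancl_into_trancl)
      then show False using trancl_irrefl_acyc[OF aG] by blast
    qed
    have rv: "\<rho>' (iG v) = r0"
    proof (rule ccontr)
      assume "\<rho>' (iG v) \<noteq> r0"
      moreover have "iG v \<noteq> iG u" using iG_inj uv_ne b vN by blast
      ultimately have "\<rho> (iG v) \<noteq> r0" unfolding \<rho>'_def by simp
      then obtain x where "x \<in> S" "iG v = iG x" using a by blast
      then show False using iG_inj b vN vS by blast
    qed
    have stepG: "(u,v) \<in> stp G (\<lambda>x. \<rho>' (iG x))"
      using that(2) unfolding stp_def \<rho>'_def lb_def by simp
    have dG': "(source G, v) \<in> (stp G (\<lambda>x. \<rho>' (iG x)))\<^sup>*"
      using rtrancl_mono[OF monoG] d stepG by (meson rtrancl.rtrancl_into_rtrancl subsetD)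
    have vterm: "\<not> (\<exists>y. (v,y) \<in> stp G (\<lambda>x. \<rho>' (iG x)))"
      using rv r0G unfolding stp_def by force
    have eH': "(source H, \<Gamma> u) \<in> (stp H (\<lambda>x. \<rho>' (iH x)))\<^sup>*"
      using rtrancl_mono[OF monoH] e by blast
    have GuN: "\<Gamma> u \<in> nodes H" using G_nodes b by blast
    have "\<exists>y. (\<Gamma> u, y) \<in> stp H (\<lambda>x. \<rho>' (iH x))"
    proof (rule ccontr)
      assume "\<not> ?thesis"
      then have "iG v = iH (\<Gamma> u)" using K[OF dG' vterm eH'] by blast
      then have "iG v = iG u" using iH_G b by simp
      then show False using iG_inj uv_ne b vN by blast
    qed
    then obtain y where y: "(\<Gamma> u, y) \<in> stp H (\<lambda>x. \<rho>' (iH x))" by blast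
    have yarc: "(\<Gamma> u, y) \<in> arcs H" using y stp_sub by blast
    have yN: "y \<in> nodes H" using arcs_nodes[OF dH yarc] by blast
    have ylab: "lab H (\<Gamma> u, y) = lb"
      using y iH_G b unfolding stp_def \<rho>'_def by simp
    have yterm: "\<not> (\<exists>z. (y,z) \<in> stp H (\<lambda>x. \<rho>' (iH x)))"
    proof
      assume "\<exists>z. (y,z) \<in> stp H (\<lambda>x. \<rho>' (iH x))"
      then obtain z where z: "(y,z) \<in> arcs H" "lab H (y,z) = \<rho>' (iH y)" unfolding stp_def by blast
      have "\<rho>' (iH y) \<noteq> r0" using z r0H by force
      then have "iH y = iG u \<or> \<rho> (iH y) \<noteq> r0" unfolding \<rho>'_def by (auto split: if_splits)
      then show False
      proof
        assume "iH y = iG u"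
        then have "y = \<Gamma> u" using H_iH yN b by blast
        then show False using yarc trancl_irrefl_acyc[OF aH] by blast
      next
        assume "\<rho> (iH y) \<noteq> r0"
        then obtain x where x: "x \<in> S" "iH y = iG x" using a by blast
        then have "y = \<Gamma> x" using H_iH yN b by blast
        moreover have "(\<Gamma> x, \<Gamma> u) \<in> (arcs H)\<^sup>+" using f x(1) trancl_mono stp_sub by blast
        ultimately have "(y, y) \<in> (arcs H)\<^sup>+" using yarc by (meson trancl_into_trancl)
        then show False using trancl_irrefl_acyc[OF aH] by blast
      qed
    qed
    have "iG v = iH y"
      using K[OF dG' vterm _ yterm] eH' y by (meson rtrancl.rtrancl_into_rtrancl)
    then have yv: "y = \<Gamma> v" using H_iH yN vN by metis
    have stepH: "(\<Gamma> u, \<Gamma> v) \<in> stp H (\<lambda>x. \<rho>' (iH x))" using y yv by simp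
    have Inv_v: "Inv v"
      unfolding Inv_def
    proof (intro exI[of _ \<rho>'] exI[of _ "insert u S"] conjI ballI allI impI)
      fix i assume "\<rho>' i \<noteq> r0"
      then show "i \<in> iG ` insert u S" using a unfolding \<rho>'_def by (auto split: if_splits)
    next
      show "insert u S \<subseteq> nodes G" using b by blast
    next
      show "v \<in> nodes G" by (rule vN)
    next
      show "v \<notin> insert u S" using vS uv_ne by blast
    next
      fix x assume "x \<in> insert u S"
      then show "(x, v) \<in> (stp G (\<lambda>x. \<rho>' (iG x)))\<^sup>+"
      proof
        assume "x = u" then show ?thesis using stepG by blast
      next
        assume "x \<in> S"
        then have "(x,u) \<in> (stp G (\<lambda>x. \<rho>' (iG x)))\<^sup>+" using c trancl_mono[OF _ monoG] by blast
        then show ?thesis using stepG by (rule trancl_into_trancl)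
      qed
    next
      show "(source G, v) \<in> (stp G (\<lambda>x. \<rho>' (iG x)))\<^sup>*" by (rule dG')
    next
      show "(source H, \<Gamma> v) \<in> (stp H (\<lambda>x. \<rho>' (iH x)))\<^sup>*"
        using eH' stepH by (rule rtrancl.rtrancl_into_rtrancl)
    next
      fix x assume "x \<in> insert u S"
      then show "(\<Gamma> x, \<Gamma> v) \<in> (stp H (\<lambda>x. \<rho>' (iH x)))\<^sup>+"
      proof
        assume "x = u" then show ?thesis using stepH by blast
      next
        assume "x \<in> S"
        then have "(\<Gamma> x, \<Gamma> u) \<in> (stp H (\<lambda>x. \<rho>' (iH x)))\<^sup>+" using f trancl_mono[OF _ monoH] by blast
        then show ?thesis using stepH by (rule trancl_into_trancl)
      qed
    qed
    show ?thesis using stepH ylab yv Inv_v unfolding stp_def lb_def by simp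
  qed

  have Inv0: "Inv (source G)"
    unfolding Inv_def
    by (rule exI[of _ "\<lambda>_. r0"], rule exI[of _ "{}"]) (simp add: srcG src)
  have "Inv u" if "(source G, u) \<in> (arcs G)\<^sup>*" for u
    using that
  proof (induction rule: rtrancl_induct)
    case base then show ?case by (rule Inv0)
  next
    case (step y z) show ?case using stepL[OF step.IH step.hyps(2)] by blast
  qed
  moreover have "(source G, u0) \<in> (arcs G)\<^sup>*"
    using reach[OF dG] arcs_nodes[OF dG uv0] by blast
  ultimately have "Inv u0" by blast
  then show ?thesis using stepL uv0 unfolding \<Gamma>_def iG_def by blast
qed


lemma transfer:
  fixes G :: "('g,'w,'s,'r) dstruct" and H :: "('h,'w,'s,'r) dstruct"
  assumes dH: "decision_structure H"
    and bij: "bij_betw \<Gamma> (nodes G) (nodes H)"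
    and iso: "\<forall>u\<in>nodes G. \<forall>v\<in>nodes G.
           ((u, v) \<in> arcs G \<longleftrightarrow> (\<Gamma> u, \<Gamma> v) \<in> arcs H) \<and>
           ((u, v) \<in> arcs G \<longrightarrow> lab G (u, v) = lab H (\<Gamma> u, \<Gamma> v))"
    and actc: "\<forall>x\<in>nodes G. act H (\<Gamma> x) = act G x"
    and dG: "decision_structure G"
  shows "selects G w v a \<Longrightarrow> v \<in> nodes G \<Longrightarrow> selects H w (\<Gamma> v) a"
proof (induction rule: selects.induct)
  case (stop v)
  have "\<not> (\<exists>u. (\<Gamma> v, u) \<in> arcs H \<and> lab H (\<Gamma> v, u) = snd (act H (\<Gamma> v)) w)"
  proof
    assume "\<exists>u. (\<Gamma> v, u) \<in> arcs H \<and> lab H (\<Gamma> v, u) = snd (act H (\<Gamma> v)) w"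
    then obtain y where y: "(\<Gamma> v, y) \<in> arcs H" "lab H (\<Gamma> v, y) = snd (act H (\<Gamma> v)) w" by blast
    have "y \<in> nodes H" using arcs_nodes[OF dH y(1)] by blast
    then obtain x where x: "x \<in> nodes G" "y = \<Gamma> x" using bij by (metis bij_betw_imp_surj_on imageE)
    have "(v, x) \<in> arcs G" using iso x stop.prems y(1) by blast
    moreover have "lab G (v,x) = snd (act G v) w"
      using iso x stop.prems y actc calculation by metis
    ultimately show False using stop.hyps by blast
  qed
  then have "selects H w (\<Gamma> v) (act H (\<Gamma> v))" by (rule selects.stop)
  then show ?case using actc stop.prems by simp
next
  case (move v u \<alpha>)
  have uN: "u \<in> nodes G" using arcs_nodes[OF dG move.hyps(1)] by blast
  have a: "(\<Gamma> v, \<Gamma> u) \<in> arcs H" using iso move.prems uN move.hyps(1) by blast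
  have l: "lab H (\<Gamma> v, \<Gamma> u) = snd (act H (\<Gamma> v)) w"
    using iso move.prems uN move.hyps(1,2) actc by metis
  show ?case by (rule selects.move[OF a l move.IH[OF uN]])
qed

lemma selected_is:
  assumes "decision_structure Z" "selects Z w (source Z) a"
  shows "selected Z w = a"
  unfolding selected_def using assms selects_det[OF assms(1)] by (intro the_equality) auto

lemma source_unique:
  assumes "decision_structure Z" "is_source Z s"
  shows "source Z = s"
  using assms is_source_source[OF assms(1)] unfolding decision_structure_def by blast

theorem mainTheorem2:
  fixes G :: "('g,'w,'s,'r) dstruct" and H :: "('h,'w,'s,'r) dstruct"
  assumes "decision_structure G" and "decision_structure H"
    and "\<exists>s1 s2 :: 's. s1 \<noteq> s2"
    and "\<exists>r :: 'r. r \<notin> lab G ` arcs G \<and> r \<notin> lab H ` arcs H"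
  shows "struct_equiv G H \<longleftrightarrow> arc_iso G H"
proof
  assume "struct_equiv G H"
  then obtain g h where cardeq: "card (nodes G) = card (nodes H)"
    and bg: "bij_betw g {..<card (nodes G)} (nodes G)"
    and bh: "bij_betw h {..<card (nodes G)} (nodes H)"
    and eq: "\<forall>\<alpha> :: nat \<Rightarrow> ('w,'s,'r) action. \<forall>w.
               selected (G\<lparr>act := (\<lambda>v. \<alpha> (inv_into {..<card (nodes G)} g v))\<rparr>) w =
               selected (H\<lparr>act := (\<lambda>v. \<alpha> (inv_into {..<card (nodes G)} h v))\<rparr>) w"
    unfolding struct_equiv_def by blast
  define n where "n = card (nodes G)"
  obtain s1 s2 :: 's where s12: "s1 \<noteq> s2" using assms(3) by blast
  obtain r0 :: 'r where r0: "r0 \<notin> lab G ` arcs G" "r0 \<notin> lab H ` arcs H" using assms(4) by blast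
  note bg = bg[folded n_def] and bh = bh[folded n_def] and eq = eq[folded n_def]
  have eq': "\<forall>\<alpha> :: nat \<Rightarrow> ('w,'s,'r) action. \<forall>w.
               selected (H\<lparr>act := (\<lambda>v. \<alpha> (inv_into {..<n} h v))\<rparr>) w =
               selected (G\<lparr>act := (\<lambda>v. \<alpha> (inv_into {..<n} g v))\<rparr>) w"
    using eq by simp
  define \<Gamma> where "\<Gamma> = (\<lambda>x. h (inv_into {..<n} g x))"
  define \<Gamma>' where "\<Gamma>' = (\<lambda>y. g (inv_into {..<n} h y))"
  have bG: "bij_betw \<Gamma> (nodes G) (nodes H)"
    unfolding \<Gamma>_def using bij_betw_trans[OF bij_betw_inv_into[OF bg] bh] by (simp add: comp_def)
  have inv: "\<Gamma>' (\<Gamma> x) = x" if "x \<in> nodes G" for x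
  proof -
    have "inv_into {..<n} g x \<in> {..<n}" using bg that
      by (metis bij_betw_imp_surj_on inv_into_into)
    then show ?thesis unfolding \<Gamma>_def \<Gamma>'_def using bh bg that
      by (simp add: bij_betw_inv_into_left bij_betw_inv_into_right)
  qed
  have F: "(\<Gamma> u, \<Gamma> v) \<in> arcs H \<and> lab G (u,v) = lab H (\<Gamma> u, \<Gamma> v)" if "(u,v) \<in> arcs G" for u v
    using fwd[OF assms(1,2) s12 r0 bg bh eq that] unfolding \<Gamma>_def .
  have B: "(\<Gamma>' x, \<Gamma>' y) \<in> arcs G" if "(x,y) \<in> arcs H" for x y
    using fwd[OF assms(2,1) s12 r0(2,1) bh bg eq' that] unfolding \<Gamma>'_def by blast
  show "arc_iso G H"
    unfolding arc_iso_def
  proof (intro exI[of _ \<Gamma>] conjI bG ballI)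
    fix u v assume uv: "u \<in> nodes G" "v \<in> nodes G"
    show "((u, v) \<in> arcs G) = ((\<Gamma> u, \<Gamma> v) \<in> arcs H)"
      using F B[of "\<Gamma> u" "\<Gamma> v"] inv uv by auto
    show "(u, v) \<in> arcs G \<longrightarrow> lab G (u, v) = lab H (\<Gamma> u, \<Gamma> v)"
      using F by blast
  qed
next
  assume "arc_iso G H"
  then obtain \<Gamma> where bG: "bij_betw \<Gamma> (nodes G) (nodes H)"
    and iso: "\<forall>u\<in>nodes G. \<forall>v\<in>nodes G.
           ((u, v) \<in> arcs G \<longleftrightarrow> (\<Gamma> u, \<Gamma> v) \<in> arcs H) \<and>
           ((u, v) \<in> arcs G \<longrightarrow> lab G (u, v) = lab H (\<Gamma> u, \<Gamma> v))"
    unfolding arc_iso_def by blast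
  define n where "n = card (nodes G)"
  have cardeq: "card (nodes G) = card (nodes H)" using bG by (rule bij_betw_same_card)
  have finG: "finite (nodes G)" using assms(1) unfolding decision_structure_def by blast
  obtain g where bg: "bij_betw g {..<n} (nodes G)"
    using ex_bij_betw_nat_finite[OF finG] unfolding n_def by (auto simp: lessThan_atLeast0)
  define h where "h = \<Gamma> \<circ> g"
  have bh: "bij_betw h {..<n} (nodes H)" unfolding h_def using bij_betw_trans[OF bg bG] .
  have invh: "inv_into {..<n} h (\<Gamma> x) = inv_into {..<n} g x" if "x \<in> nodes G" for x
  proof -
    have i: "inv_into {..<n} g x \<in> {..<n}" using bg that
      by (metis bij_betw_imp_surj_on inv_into_into)
    have "\<Gamma> x = h (inv_into {..<n} g x)" unfolding h_def using bg that
      by (simp add: bij_betw_inv_into_right)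
    then show ?thesis using bij_betw_inv_into_left[OF bh i] by simp
  qed
  have srcG: "is_source G (source G)" using is_source_source[OF assms(1)] .
  have "is_source H (\<Gamma> (source G))"
    unfolding is_source_def
  proof (intro conjI allI notI)
    show "\<Gamma> (source G) \<in> nodes H" using srcG bG by (simp add: is_source_def bij_betw_apply)
  next
    fix y assume y: "(y, \<Gamma> (source G)) \<in> arcs H"
    have "y \<in> nodes H" using arcs_nodes[OF assms(2) y] by blast
    then obtain x where x: "x \<in> nodes G" "y = \<Gamma> x" using bG by (metis bij_betw_imp_surj_on imageE)
    have sN: "source G \<in> nodes G" using srcG by (simp add: is_source_def)
    have "(\<Gamma> x, \<Gamma> (source G)) \<in> arcs H" using x y by simp
    then have "(x, source G) \<in> arcs G" using iso x(1) sN by blast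
    then show False using srcG by (simp add: is_source_def)
  qed
  then have srcH: "source H = \<Gamma> (source G)" using source_unique[OF assms(2)] by blast
  have "\<forall>\<alpha> :: nat \<Rightarrow> ('w,'s,'r) action. \<forall>w.
               selected (G\<lparr>act := (\<lambda>v. \<alpha> (inv_into {..<n} g v))\<rparr>) w =
               selected (H\<lparr>act := (\<lambda>v. \<alpha> (inv_into {..<n} h v))\<rparr>) w"
  proof (intro allI)
    fix \<alpha> :: "nat \<Rightarrow> ('w,'s,'r) action" and w :: 'w
    let ?G = "G\<lparr>act := (\<lambda>v. \<alpha> (inv_into {..<n} g v))\<rparr>"
    let ?H = "H\<lparr>act := (\<lambda>v. \<alpha> (inv_into {..<n} h v))\<rparr>"
    have dG': "decision_structure ?G" using assms(1) by simp
    have dH': "decision_structure ?H" using assms(2) by simp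
    obtain a where a: "selects ?G w (source ?G) a" using selects_exists[OF dG'] by blast
    have srcN: "source ?G \<in> nodes ?G" using srcG by (simp add: is_source_def)
    have "selects ?H w (\<Gamma> (source ?G)) a"
      by (rule transfer[OF dH' _ _ _ dG' a srcN]) (use bG iso invh in simp_all)
    then have "selects ?H w (source ?H) a" using srcH by simp
    then show "selected ?G w = selected ?H w"
      using selected_is[OF dG' a] selected_is[OF dH'] by simp
  qed
  then show "struct_equiv G H"
    unfolding struct_equiv_def using cardeq bg bh n_def by blast
qed

end
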